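(* Let $X$ be a compact metric space and $G$ a group of homeomorphisms of $X$ generated (as a group) by a finite set $G_1$, and assume $G$ is uniformly equicontinuous. Let $\mathcal G(G)$ be the pseudogroup generated by $G$. Then there is no Borel probability measure on $X$ that is $(\mathcal G(G),G_1)$-weakly expansive.
   Context: $(X,d)$ compact metric space. $\mathrm{Homeo}(X)$: homeomorphisms $g:D_g\to R_g$ between open subsets of $X$, composed on natural domains $D_{h\circ g}=g^{-1}(D_h)$. The pseudogroup generated by $\Gamma\subset\mathrm{Homeo}(X)$ is the set of $g\in\mathrm{Homeo}(X)$ such that each $x\in D_g$ has a neighborhood $U_x\subset D_g$ with $g|_{U_x}=g_1^{e_1}\circ\cdots\circ g_k^{e_k}|_{U_x}$ for some $g_i\in\Gamma$, $e_i\in\{\pm1\}$. $G$ is uniformly equicontinuous if for every $\varepsilon>0$ there is $\delta>0$ such that $d(x,y)<\delta$ implies $d(g(x),g(y))<\varepsilon$ for all $g\in G$ and $x,y\in X$. With generating set $G_1$: $\mathcal G_n=\{g_1\circ\cdots\circ g_n:g_i\in G_1\}$, $\mathcal G_n^x=\{g\in\mathcal G_n:x\in D_g\}$, $\Phi_\delta(x)=\{y\in X: d(g(x),g(y))\le\delta\ \forall n\in\mathbb N,\ \forall g\in\mathcal G_n^x\cap\mathcal G_n^y\}$. A Borel probability measure $\mu$ is $(\mathcal G(G),G_1)$-weakly expansive if there is $\delta>0$ with $\mu(\Phi_\delta(x))=0$ for $\mu$-a.e. $x$. *)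

theory Defs
  imports "HOL-Probability.Probability"
begin

inductive_set gen_group :: "('a \<Rightarrow> 'a) set \<Rightarrow> ('a \<Rightarrow> 'a) set" for G1 where
  gen_id: "id \<in> gen_group G1"
| gen_base: "g \<in> G1 \<Longrightarrow> g \<in> gen_group G1"
| gen_inv: "g \<in> G1 \<Longrightarrow> inv g \<in> gen_group G1"
| gen_comp: "g \<in> gen_group G1 \<Longrightarrow> h \<in> gen_group G1 \<Longrightarrow> g \<circ> h \<in> gen_group G1"

definition unif_equicontinuous :: "('a::metric_space \<Rightarrow> 'a) set \<Rightarrow> bool" where
  "unif_equicontinuous G \<longleftrightarrow>
     (\<forall>e>0. \<exists>d>0. \<forall>g\<in>G. \<forall>x y. dist x y < d \<longrightarrow> dist (g x) (g y) < e)"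

text \<open>\<open>\<G>_n\<close>: compositions of exactly n elements of G1 (global maps, so
  every domain is the whole space).\<close>
definition words :: "('a \<Rightarrow> 'a) set \<Rightarrow> nat \<Rightarrow> ('a \<Rightarrow> 'a) set" where
  "words G1 n = {foldr (\<circ>) gs id | gs. length gs = n \<and> set gs \<subseteq> G1}"

definition Phi :: "('a::metric_space \<Rightarrow> 'a) set \<Rightarrow> real \<Rightarrow> 'a \<Rightarrow> 'a set" where
  "Phi G1 \<delta> x = {y. \<forall>n\<ge>1. \<forall>g\<in>words G1 n. dist (g x) (g y) \<le> \<delta>}"

definition weakly_expansive :: "'a::metric_space measure \<Rightarrow> ('a \<Rightarrow> 'a) set \<Rightarrow> bool" where
  "weakly_expansive M G1 \<longleftrightarrow> (\<exists>\<delta>>0. AE x in M. emeasure M (Phi G1 \<delta> x) = 0)"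

end

theory Submission
  imports Defs
begin

lemma words_sub:
  assumes "g \<in> words G1 n" shows "g \<in> gen_group G1"
proof -
  obtain gs where g: "g = foldr (\<circ>) gs id" "set gs \<subseteq> G1" using assms unfolding words_def by blast
  have "foldr (\<circ>) gs id \<in> gen_group G1" using g(2)
    by (induction gs) (auto intro: gen_group.intros)
  then show ?thesis using g by simp
qed

lemma words_cont:
  assumes "\<forall>g\<in>G1. \<exists>g'. homeomorphism UNIV UNIV g g'" "g \<in> words G1 n"
  shows "continuous_on UNIV g"
proof -
  obtain gs where g: "g = foldr (\<circ>) gs id" "set gs \<subseteq> G1" using assms unfolding words_def by blast
  have "continuous_on UNIV (foldr (\<circ>) gs id)" using g(2)
  proof (induction gs)
    case Nil then show ?case by (simp add: continuous_on_id)
  next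
    case (Cons a gs)
    from Cons.prems have "a \<in> G1" by simp
    then obtain a' where "homeomorphism UNIV UNIV a a'" using assms(1) by blast
    then have ca: "continuous_on UNIV a" by (simp add: homeomorphism_def)
    have "set gs \<subseteq> G1" using Cons.prems by simp
    then have IH: "continuous_on UNIV (foldr (\<circ>) gs id)" by (rule Cons.IH)
    have "continuous_on UNIV (a \<circ> foldr (\<circ>) gs id)"
      by (rule continuous_on_compose[OF IH continuous_on_subset[OF ca subset_UNIV]])
    moreover have "foldr (\<circ>) (a # gs) id = a \<circ> foldr (\<circ>) gs id" by simp
    ultimately show ?case by metis
  qed
  then show ?thesis using g by simp
qed

lemma Phi_closed:
  assumes "\<forall>g\<in>G1. \<exists>g'. homeomorphism UNIV UNIV g g'"
  shows "closed (Phi G1 \<delta> x)"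
proof -
  have "Phi G1 \<delta> x = (\<Inter>g\<in>(\<Union>n\<in>{1..}. words G1 n). {y. dist (g x) (g y) \<le> \<delta>})"
    unfolding Phi_def by auto
  moreover have "closed {y. dist (g x) (g y) \<le> \<delta>}" if "g \<in> (\<Union>n\<in>{1..}. words G1 n)" for g
  proof -
    have "continuous_on UNIV g" using that words_cont[OF assms] by blast
    then show ?thesis
      by (intro closed_Collect_le continuous_on_dist continuous_on_const) auto
  qed
  ultimately show ?thesis using closed_INT by (metis (no_types, lifting))
qed

theorem theoremC:
  fixes G1 :: "('a::metric_space \<Rightarrow> 'a) set"
  assumes "compact (UNIV :: 'a set)"
    and "finite G1"
    and "\<forall>g\<in>G1. \<exists>g'. homeomorphism UNIV UNIV g g'"
    and "unif_equicontinuous (gen_group G1)"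
  shows "\<not> (\<exists>M. prob_space M \<and> sets M = sets borel \<and> weakly_expansive M G1)"
proof
  assume "\<exists>M. prob_space M \<and> sets M = sets borel \<and> weakly_expansive M G1"
  then obtain M \<delta> where P: "prob_space M" and S: "sets M = sets borel" and d: "\<delta> > 0"
    and AE: "AE x in M. emeasure M (Phi G1 \<delta> x) = 0"
    unfolding weakly_expansive_def by blast
  have sp: "space M = UNIV" using sets_eq_imp_space_eq[OF S] by simp
  obtain \<eta> where e: "\<eta> > 0" and eq: "\<And>g x y. g \<in> gen_group G1 \<Longrightarrow> dist x y < \<eta> \<Longrightarrow> dist (g x) (g y) < \<delta>"
    using assms(4) d unfolding unif_equicontinuous_def by meson
  have ballsub: "ball x \<eta> \<subseteq> Phi G1 \<delta> x" for x
  proof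
    fix y assume y: "y \<in> ball x \<eta>"
    show "y \<in> Phi G1 \<delta> x" unfolding Phi_def
    proof (intro CollectI allI impI ballI)
      fix n g assume "g \<in> words G1 n"
      then have "g \<in> gen_group G1" by (rule words_sub)
      moreover have "dist x y < \<eta>" using y by simp
      ultimately show "dist (g x) (g y) \<le> \<delta>" using eq less_imp_le by blast
    qed
  qed
  have meas: "A \<in> sets M" if "closed A \<or> open A" for A
    using that unfolding S by (metis borel_closed borel_open)
  have cov: "UNIV \<subseteq> (\<Union>c\<in>(UNIV::'a set). ball c (\<eta>/2))"
  proof (rule subsetI)
    fix y :: 'a assume "y \<in> UNIV"
    have "y \<in> ball y (\<eta>/2)" using e by simp
    then show "y \<in> (\<Union>c\<in>UNIV. ball c (\<eta>/2))" by blast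
  qed
  obtain C :: "'a set" where C0: "C \<subseteq> UNIV" and C: "finite C" "UNIV \<subseteq> (\<Union>c\<in>C. ball c (\<eta>/2))"
    by (rule compactE_image[OF assms(1) open_ball cov])
  have "\<exists>c\<in>C. ball c (\<eta>/2) \<notin> null_sets M"
  proof (rule ccontr)
    assume "\<not> ?thesis"
    then have "(\<Union>c\<in>C. ball c (\<eta>/2)) \<in> null_sets M"
      using C(1) by (intro null_sets.finite_UN) auto
    moreover have "(\<Union>c\<in>C. ball c (\<eta>/2)) = UNIV" using C(2) by (metis subset_UNIV subset_antisym)
    ultimately have "UNIV \<in> null_sets M" by simp
    then have "emeasure M UNIV = 0" by (rule null_setsD1)
    moreover have "emeasure M UNIV = 1" using prob_space.emeasure_space_1[OF P] sp by simp
    ultimately show False by simp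
  qed
  then obtain c where c: "ball c (\<eta>/2) \<notin> null_sets M" by blast
  obtain N where N2: "{x \<in> space M. \<not> emeasure M (Phi G1 \<delta> x) = 0} \<subseteq> N" "emeasure M N = 0" "N \<in> sets M"
    using AE by (rule AE_E)
  have N: "N \<in> null_sets M" "{x \<in> space M. \<not> emeasure M (Phi G1 \<delta> x) = 0} \<subseteq> N"
    using N2 by auto
  have "\<exists>x\<in>ball c (\<eta>/2). emeasure M (Phi G1 \<delta> x) = 0"
  proof (rule ccontr)
    assume "\<not> ?thesis"
    then have "ball c (\<eta>/2) \<subseteq> N" using N(2) sp by auto
    then have "ball c (\<eta>/2) \<in> null_sets M"
      using N(1) meas null_sets_subset by blast
    then show False using c by blast
  qed
  then obtain x where x: "x \<in> ball c (\<eta>/2)" "emeasure M (Phi G1 \<delta> x) = 0" by blast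
  have "ball c (\<eta>/2) \<subseteq> ball x \<eta>"
  proof
    fix y assume "y \<in> ball c (\<eta>/2)"
    then show "y \<in> ball x \<eta>" using x(1) dist_triangle[of x y c]
      by (auto simp: dist_commute)
  qed
  then have "ball c (\<eta>/2) \<subseteq> Phi G1 \<delta> x" using ballsub by blast
  then have "emeasure M (ball c (\<eta>/2)) \<le> emeasure M (Phi G1 \<delta> x)"
    using Phi_closed[OF assms(3)] by (intro emeasure_mono meas) auto
  then have "ball c (\<eta>/2) \<in> null_sets M" using x(2) meas by auto
  then show False using c by blast
qed

end
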